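(* For any integers $n\ge4$ and $k<\frac{n-1}{2}$, the Cayley graph of $\mathbb{Z}_n$ with generators $\{\pm1,\dots,\pm k\}$ (i.e. the graph on $\{0,\dots,n-1\}$ where $i,j$ are adjacent iff $j-i\equiv\pm g\pmod n$ for some $g\in\{1,\dots,k\}$) has broadcast rate $\beta=n/(k+1)$.
   Context: For an undirected graph $G$ on vertex set $V$, consider the index coding problem: a server holds messages $x_v\in\Sigma$ ($|\Sigma|>1$), receiver $v$ wants $x_v$ and knows $x_u$ for every neighbor $u$ of $v$. A solution is an encoding $\mathcal{E}:\Sigma^{V}\to\Sigma_P$ from which each receiver can recover its message given its side information, for all message values. $\beta_t(G)$ is the minimum of $\lceil\log_2|\Sigma_P|\rceil$ over solutions with $|\Sigma|=2^t$, and the broadcast rate is $\beta(G)=\lim_t\beta_t(G)/t=\inf_t\beta_t(G)/t$. *)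

theory Defs
  imports "HOL-Analysis.Analysis" "HOL-Number_Theory.Cong"
begin

text \<open>An encoding E maps message vectors into the
  public alphabet P.  Receiver v knows x restricted to N v and must decode x v.\<close>

definition msgs :: "'v set \<Rightarrow> nat \<Rightarrow> ('v \<Rightarrow> nat) set" where
  "msgs V t = PiE V (\<lambda>_. {..<2^t})"

definition ic_solution ::
  "'v set \<Rightarrow> ('v \<Rightarrow> 'v set) \<Rightarrow> nat \<Rightarrow> nat set \<Rightarrow> (('v \<Rightarrow> nat) \<Rightarrow> nat) \<Rightarrow> bool" where
  "ic_solution V N t P E \<longleftrightarrow>
     (\<forall>x\<in>msgs V t. E x \<in> P) \<and>
     (\<forall>v\<in>V. \<exists>D :: nat \<Rightarrow> ('v \<Rightarrow> nat) \<Rightarrow> nat.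
        \<forall>x\<in>msgs V t. D (E x) (restrict x (N v)) = x v)"

definition beta_t :: "'v set \<Rightarrow> ('v \<Rightarrow> 'v set) \<Rightarrow> nat \<Rightarrow> nat" where
  "beta_t V N t = (LEAST m. \<exists>P E. finite P \<and> ic_solution V N t P E \<and>
                               m = nat \<lceil>log 2 (real (card P))\<rceil>)"

definition broadcast_rate :: "'v set \<Rightarrow> ('v \<Rightarrow> 'v set) \<Rightarrow> real" where
  "broadcast_rate V N = (INF t\<in>{1..}. real (beta_t V N t) / real t)"

definition circ_nbrs :: "nat \<Rightarrow> nat \<Rightarrow> nat \<Rightarrow> nat set" where
  "circ_nbrs n k i = {j \<in> {0..<n}. \<exists>g\<in>{1..k}.
       [int j - int i = int g] (mod int n) \<or> [int j - int i = - int g] (mod int n)}"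

end

theory Submission
  imports Defs
begin


definition cnt :: "'a set \<Rightarrow> ('a \<Rightarrow> 'b) \<Rightarrow> 'a \<Rightarrow> nat" where
  "cnt \<Omega> F w = card {w'\<in>\<Omega>. F w' = F w}"

definition ent :: "'a set \<Rightarrow> ('a \<Rightarrow> 'b) \<Rightarrow> real" where
  "ent \<Omega> F = (\<Sum>w\<in>\<Omega>. log 2 (real (card \<Omega>) / real (cnt \<Omega> F w))) / real (card \<Omega>)"

lemma cnt_pos: "finite \<Omega> \<Longrightarrow> w \<in> \<Omega> \<Longrightarrow> cnt \<Omega> F w \<ge> 1"
proof -
  assume a: "finite \<Omega>" "w \<in> \<Omega>"
  have "card {w'\<in>\<Omega>. F w' = F w} > 0" using a by (subst card_gt_0_iff) auto
  then show ?thesis unfolding cnt_def by simp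
qed

lemma cnt_gt0: "finite \<Omega> \<Longrightarrow> w \<in> \<Omega> \<Longrightarrow> 0 < cnt \<Omega> F w"
  using cnt_pos[of \<Omega> w F] by simp

lemma ent_cong:
  assumes "\<And>w w'. w \<in> \<Omega> \<Longrightarrow> w' \<in> \<Omega> \<Longrightarrow> F w' = F w \<longleftrightarrow> G w' = G w"
  shows "ent \<Omega> F = ent \<Omega> G"
proof -
  have "cnt \<Omega> F w = cnt \<Omega> G w" if "w \<in> \<Omega>" for w
    unfolding cnt_def using assms[OF that] by (metis (no_types, lifting))
  then show ?thesis unfolding ent_def by (simp cong: sum.cong)
qed

lemma sum_inv_cnt:
  assumes fin: "finite \<Omega>"
  shows "(\<Sum>w\<in>\<Omega>. 1 / real (cnt \<Omega> F w)) = real (card (F ` \<Omega>))"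
proof -
  have "(\<Sum>w\<in>\<Omega>. 1 / real (cnt \<Omega> F w)) = (\<Sum>y\<in>F ` \<Omega>. \<Sum>w\<in>{x. x \<in> \<Omega> \<and> F x = y}. 1 / real (cnt \<Omega> F w))"
    by (rule sum.image_gen[OF fin])
  also have "\<dots> = (\<Sum>y\<in>F ` \<Omega>. 1)"
  proof (rule sum.cong[OF refl])
    fix y assume y: "y \<in> F ` \<Omega>"
    let ?T = "{x. x \<in> \<Omega> \<and> F x = y}"
    have c: "cnt \<Omega> F w = card ?T" if "w \<in> ?T" for w
      using that unfolding cnt_def by (metis (mono_tags, lifting) mem_Collect_eq)
    have "card ?T > 0" using y fin by (subst card_gt_0_iff) auto
    then have ne: "card ?T \<ge> 1" by simp
    have "(\<Sum>w\<in>?T. 1 / real (cnt \<Omega> F w)) = (\<Sum>w\<in>?T. 1 / real (card ?T))"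
      using c by simp
    also have "\<dots> = 1" using ne by simp
    finally show "(\<Sum>w\<in>?T. 1 / real (cnt \<Omega> F w)) = 1" .
  qed
  finally show ?thesis by simp
qed

lemma log2_le: "0 < (u::real) \<Longrightarrow> log 2 u \<le> (u - 1) / ln 2"
  by (simp add: log_def divide_right_mono ln_le_minus_one)

lemma log2_ge: "0 < (u::real) \<Longrightarrow> (1 - 1/u) / ln 2 \<le> log 2 u"
proof -
  assume u: "0 < u"
  have "ln (1/u) \<le> 1/u - 1" using u by (simp add: ln_le_minus_one)
  then have "1 - 1/u \<le> ln u" using u by (simp add: ln_div)
  then show ?thesis by (simp add: log_def divide_right_mono)
qed

lemma ent_le_card:
  assumes fin: "finite \<Omega>" and ne: "\<Omega> \<noteq> {}"
  shows "ent \<Omega> F \<le> log 2 (real (card (F ` \<Omega>)))"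
proof -
  define N where "N = real (card \<Omega>)"
  define K where "K = real (card (F ` \<Omega>))"
  have N: "N > 0" using fin ne by (simp add: N_def card_gt_0_iff)
  have K: "K > 0" using fin ne by (simp add: K_def card_gt_0_iff)
  have c: "real (cnt \<Omega> F w) > 0" if "w \<in> \<Omega>" for w using cnt_pos[OF fin that, of F] by simp
  have "(\<Sum>w\<in>\<Omega>. log 2 (N / real (cnt \<Omega> F w))) - N * log 2 K
      = (\<Sum>w\<in>\<Omega>. log 2 (N / (K * real (cnt \<Omega> F w))))"
  proof -
    have "(\<Sum>w\<in>\<Omega>. log 2 (N / (K * real (cnt \<Omega> F w)))) = (\<Sum>w\<in>\<Omega>. log 2 (N / real (cnt \<Omega> F w)) - log 2 K)"
      by (rule sum.cong[OF refl]) (use N K c in \<open>simp add: log_divide log_mult\<close>)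
    also have "\<dots> = (\<Sum>w\<in>\<Omega>. log 2 (N / real (cnt \<Omega> F w))) - N * log 2 K"
      by (simp add: sum_subtractf N_def)
    finally show ?thesis by simp
  qed
  also have "\<dots> \<le> (\<Sum>w\<in>\<Omega>. (N / (K * real (cnt \<Omega> F w)) - 1) / ln 2)"
    by (rule sum_mono, rule log2_le) (use N K c in auto)
  also have "\<dots> = ((N / K) * (\<Sum>w\<in>\<Omega>. 1 / real (cnt \<Omega> F w)) - N) / ln 2"
    by (simp add: sum_divide_distrib[symmetric] sum_subtractf sum_distrib_left N_def)
  also have "\<dots> = 0" using K by (simp add: sum_inv_cnt[OF fin] K_def)
  finally have "(\<Sum>w\<in>\<Omega>. log 2 (N / real (cnt \<Omega> F w))) \<le> N * log 2 K" by simp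
  then show ?thesis unfolding ent_def N_def[symmetric] K_def[symmetric] using N
    by (simp add: divide_le_eq mult.commute)
qed

lemma double_count:
  assumes fin: "finite \<Omega>"
  shows "(\<Sum>w\<in>\<Omega>. real (cnt \<Omega> (\<lambda>w. (X w, Z w)) w) * real (cnt \<Omega> (\<lambda>w. (Y w, Z w)) w)
            / (real (cnt \<Omega> (\<lambda>w. (X w, Y w, Z w)) w) * real (cnt \<Omega> Z w))) \<le> real (card \<Omega>)"
proof -
  define a where "a w = real (cnt \<Omega> (\<lambda>w. (X w, Y w, Z w)) w)" for w
  define z where "z w = real (cnt \<Omega> Z w)" for w
  define A where "A w = {w1\<in>\<Omega>. (X w1, Z w1) = (X w, Z w)}" for w
  define B where "B w = {w2\<in>\<Omega>. (Y w2, Z w2) = (Y w, Z w)}" for w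
  have pq: "real (cnt \<Omega> (\<lambda>w. (X w, Z w)) w) * real (cnt \<Omega> (\<lambda>w. (Y w, Z w)) w) = real (card (A w \<times> B w))" for w
    by (simp add: cnt_def A_def B_def card_cartesian_product)
  have AB: "A w \<times> B w \<subseteq> \<Omega> \<times> \<Omega>" for w by (auto simp: A_def B_def)
  have step1: "real (card (A w \<times> B w)) / (a w * z w) = (\<Sum>u\<in>\<Omega>\<times>\<Omega>. if u \<in> A w \<times> B w then 1 / (a w * z w) else 0)" for w
  proof -
    have "(\<Sum>u\<in>\<Omega>\<times>\<Omega>. if u \<in> A w \<times> B w then 1 / (a w * z w) else 0) = (\<Sum>u\<in>A w \<times> B w. 1 / (a w * z w))"
      using fin AB by (simp add: sum.If_cases Int_absorb1)
    then show ?thesis by simp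
  qed
  have "(\<Sum>w\<in>\<Omega>. real (cnt \<Omega> (\<lambda>w. (X w, Z w)) w) * real (cnt \<Omega> (\<lambda>w. (Y w, Z w)) w) / (a w * z w))
      = (\<Sum>w\<in>\<Omega>. \<Sum>u\<in>\<Omega>\<times>\<Omega>. if u \<in> A w \<times> B w then 1 / (a w * z w) else 0)"
    by (simp add: pq step1)
  also have "\<dots> = (\<Sum>u\<in>\<Omega>\<times>\<Omega>. \<Sum>w\<in>\<Omega>. if u \<in> A w \<times> B w then 1 / (a w * z w) else 0)"
    by (rule sum.swap)
  also have "\<dots> \<le> (\<Sum>u\<in>\<Omega>\<times>\<Omega>. if Z (fst u) = Z (snd u) then 1 / z (fst u) else 0)"
  proof (rule sum_mono)
    fix u assume u: "u \<in> \<Omega> \<times> \<Omega>"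
    obtain w1 w2 where u12: "u = (w1, w2)" by (cases u)
    define T where "T = {w\<in>\<Omega>. X w = X w1 \<and> Y w = Y w2 \<and> Z w = Z w1 \<and> Z w = Z w2}"
    have eq: "(\<Sum>w\<in>\<Omega>. if u \<in> A w \<times> B w then 1 / (a w * z w) else 0) = (\<Sum>w\<in>T. 1 / (a w * z w))"
      unfolding T_def using u by (auto simp: sum.inter_filter[OF fin, symmetric] u12 A_def B_def intro!: sum.cong)
    show "(\<Sum>w\<in>\<Omega>. if u \<in> A w \<times> B w then 1 / (a w * z w) else 0) \<le> (if Z (fst u) = Z (snd u) then 1 / z (fst u) else 0)"
    proof (cases "T = {}")
      case True then show ?thesis unfolding eq by (simp add: z_def)
    next
      case False
      then obtain w0 where w0: "w0 \<in> T" by auto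
      have Zeq: "Z w1 = Z w2" using w0 unfolding T_def by auto
      have finT: "finite T" using fin by (simp add: T_def)
      have aw: "a w = real (card T)" if "w \<in> T" for w
      proof -
        have "{w'\<in>\<Omega>. (X w', Y w', Z w') = (X w, Y w, Z w)} = T" using that by (auto simp: T_def)
        then show ?thesis by (simp add: a_def cnt_def)
      qed
      have zw: "z w = z w1" if "w \<in> T" for w
        using that by (simp add: z_def cnt_def T_def)
      have "(\<Sum>w\<in>T. 1 / (a w * z w)) = (\<Sum>w\<in>T. 1 / (real (card T) * z w1))"
        using aw zw by simp
      also have "\<dots> = 1 / z w1" using False finT by (simp add: card_gt_0_iff)
      finally show ?thesis unfolding eq using Zeq by (simp add: u12)
    qed
  qed
  also have "\<dots> = (\<Sum>w1\<in>\<Omega>. \<Sum>w2\<in>\<Omega>. if Z w1 = Z w2 then 1 / z w1 else 0)"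
    by (subst sum.cartesian_product) (simp add: split_beta)
  also have "\<dots> = (\<Sum>w1\<in>\<Omega>. 1)"
  proof (rule sum.cong[OF refl])
    fix w1 assume w1: "w1 \<in> \<Omega>"
    have "(\<Sum>w2\<in>\<Omega>. if Z w1 = Z w2 then 1 / z w1 else 0) = (\<Sum>w2\<in>{w2\<in>\<Omega>. Z w2 = Z w1}. 1 / z w1)"
      unfolding sum.inter_filter[OF fin] by (rule sum.cong) auto
    also have "\<dots> = real (card {w2\<in>\<Omega>. Z w2 = Z w1}) / z w1" by simp
    also have "\<dots> = 1" using cnt_pos[OF fin w1, of Z] by (simp add: z_def cnt_def)
    finally show "(\<Sum>w2\<in>\<Omega>. if Z w1 = Z w2 then 1 / z w1 else 0) = 1" .
  qed
  finally show ?thesis by (simp add: a_def z_def)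
qed

lemma ent_submod:
  assumes fin: "finite \<Omega>"
  shows "ent \<Omega> (\<lambda>w. (X w, Y w, Z w)) + ent \<Omega> Z \<le> ent \<Omega> (\<lambda>w. (X w, Z w)) + ent \<Omega> (\<lambda>w. (Y w, Z w))"
proof (cases "\<Omega> = {}")
  case True then show ?thesis by (simp add: ent_def)
next
  case ne: False
  define N where "N = real (card \<Omega>)"
  have N: "N > 0" using fin ne by (simp add: N_def card_gt_0_iff)
  define a where "a w = real (cnt \<Omega> (\<lambda>w. (X w, Y w, Z w)) w)" for w
  define z where "z w = real (cnt \<Omega> Z w)" for w
  define p where "p w = real (cnt \<Omega> (\<lambda>w. (X w, Z w)) w)" for w
  define q where "q w = real (cnt \<Omega> (\<lambda>w. (Y w, Z w)) w)" for w
  have pos: "a w > 0" "z w > 0" "p w > 0" "q w > 0" if "w \<in> \<Omega>" for w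
    using cnt_gt0[OF fin that] by (auto simp: a_def z_def p_def q_def)
  have key: "(\<Sum>w\<in>\<Omega>. p w * q w / (a w * z w)) \<le> N"
    using double_count[OF fin, of X Z Y] by (simp add: a_def z_def p_def q_def N_def)
  have "(\<Sum>w\<in>\<Omega>. log 2 (N / p w)) + (\<Sum>w\<in>\<Omega>. log 2 (N / q w)) - (\<Sum>w\<in>\<Omega>. log 2 (N / a w)) - (\<Sum>w\<in>\<Omega>. log 2 (N / z w))
      = (\<Sum>w\<in>\<Omega>. log 2 ((a w * z w) / (p w * q w)))"
  proof -
    have "(\<Sum>w\<in>\<Omega>. log 2 ((a w * z w) / (p w * q w))) = (\<Sum>w\<in>\<Omega>. log 2 (N / p w) + log 2 (N / q w) - log 2 (N / a w) - log 2 (N / z w))"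
    proof (rule sum.cong[OF refl])
      fix w assume w: "w \<in> \<Omega>"
      note P = pos[OF w]
      have "log 2 ((a w * z w) / (p w * q w)) = log 2 (a w) + log 2 (z w) - log 2 (p w) - log 2 (q w)"
        using P by (simp add: log_divide log_mult)
      moreover have "log 2 (N / p w) = log 2 N - log 2 (p w)" "log 2 (N / q w) = log 2 N - log 2 (q w)"
        "log 2 (N / a w) = log 2 N - log 2 (a w)" "log 2 (N / z w) = log 2 N - log 2 (z w)"
        using P N by (simp_all add: log_divide)
      ultimately show "log 2 ((a w * z w) / (p w * q w)) = log 2 (N / p w) + log 2 (N / q w) - log 2 (N / a w) - log 2 (N / z w)"
        by simp
    qed
    then show ?thesis by (simp add: sum.distrib sum_subtractf)
  qed
  also have "\<dots> \<ge> (\<Sum>w\<in>\<Omega>. (1 - 1 / ((a w * z w) / (p w * q w))) / ln 2)"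
    by (rule sum_mono, rule log2_ge) (use pos in auto)
  moreover have "(\<Sum>w\<in>\<Omega>. (1 - 1 / ((a w * z w) / (p w * q w))) / ln 2) = (N - (\<Sum>w\<in>\<Omega>. p w * q w / (a w * z w))) / ln 2"
    by (simp add: sum_divide_distrib[symmetric] sum_subtractf N_def)
  moreover have "(N - (\<Sum>w\<in>\<Omega>. p w * q w / (a w * z w))) / ln 2 \<ge> 0" using key by simp
  ultimately have "(\<Sum>w\<in>\<Omega>. log 2 (N / a w)) + (\<Sum>w\<in>\<Omega>. log 2 (N / z w)) \<le> (\<Sum>w\<in>\<Omega>. log 2 (N / p w)) + (\<Sum>w\<in>\<Omega>. log 2 (N / q w))"
    by linarith
  then show ?thesis unfolding ent_def N_def[symmetric] a_def[symmetric] z_def[symmetric] p_def[symmetric] q_def[symmetric]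
    using N by (simp add: add_divide_distrib[symmetric] divide_right_mono)
qed

lemma ent_const: "finite \<Omega> \<Longrightarrow> ent \<Omega> (\<lambda>w. c) = 0"
  by (simp add: ent_def cnt_def)



definition hS :: "'v set \<Rightarrow> nat \<Rightarrow> (('v \<Rightarrow> nat) \<Rightarrow> nat) \<Rightarrow> 'v set \<Rightarrow> real" where
  "hS V t E S = ent (msgs V t) (\<lambda>x. (E x, restrict x S))"

lemma restrict_eq_iff: "restrict x A = restrict y A \<longleftrightarrow> (\<forall>a\<in>A. x a = y a)"
  by (auto simp: restrict_def fun_eq_iff)

lemma msgs_finite: "finite V \<Longrightarrow> finite (msgs V t)"
  by (simp add: msgs_def finite_PiE)

lemma msgs_ne: "msgs V t \<noteq> {}"
  unfolding msgs_def by (auto simp: PiE_eq_empty_iff lessThan_empty_iff)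

lemma card_msgs: "finite V \<Longrightarrow> card (msgs V t) = 2 ^ (t * card V)"
  by (simp add: msgs_def card_PiE power_mult)

lemma hS_submod:
  assumes fin: "finite V"
  shows "hS V t E (A \<union> B) + hS V t E (A \<inter> B) \<le> hS V t E A + hS V t E B"
proof -
  let ?\<Omega> = "msgs V t"
  have "ent ?\<Omega> (\<lambda>x. (restrict x A, restrict x B, (E x, restrict x (A \<inter> B)))) + ent ?\<Omega> (\<lambda>x. (E x, restrict x (A \<inter> B)))
     \<le> ent ?\<Omega> (\<lambda>x. (restrict x A, (E x, restrict x (A \<inter> B)))) + ent ?\<Omega> (\<lambda>x. (restrict x B, (E x, restrict x (A \<inter> B))))"
    by (rule ent_submod[OF msgs_finite[OF fin]])
  moreover have "ent ?\<Omega> (\<lambda>x. (restrict x A, restrict x B, (E x, restrict x (A \<inter> B)))) = hS V t E (A \<union> B)"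
    unfolding hS_def by (rule ent_cong) (auto simp: restrict_eq_iff)
  moreover have "ent ?\<Omega> (\<lambda>x. (restrict x A, (E x, restrict x (A \<inter> B)))) = hS V t E A"
    unfolding hS_def by (rule ent_cong) (auto simp: restrict_eq_iff)
  moreover have "ent ?\<Omega> (\<lambda>x. (restrict x B, (E x, restrict x (A \<inter> B)))) = hS V t E B"
    unfolding hS_def by (rule ent_cong) (auto simp: restrict_eq_iff)
  ultimately show ?thesis unfolding hS_def by simp
qed

lemma hS_decode:
  assumes sol: "ic_solution V N t P E" and v: "v \<in> V" and NS: "N v \<subseteq> S"
  shows "hS V t E (insert v S) = hS V t E S"
proof -
  obtain D where D: "\<And>x. x \<in> msgs V t \<Longrightarrow> D (E x) (restrict x (N v)) = x v"
    using sol v unfolding ic_solution_def by blast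
  show ?thesis unfolding hS_def
  proof (rule ent_cong)
    fix x y assume x: "x \<in> msgs V t" and y: "y \<in> msgs V t"
    show "((E y, restrict y (insert v S)) = (E x, restrict x (insert v S))) = ((E y, restrict y S) = (E x, restrict x S))"
    proof
      assume "(E y, restrict y S) = (E x, restrict x S)"
      then have e: "E y = E x" and r: "\<forall>a\<in>S. y a = x a" by (auto simp: restrict_eq_iff)
      have "restrict y (N v) = restrict x (N v)" using r NS by (auto simp: restrict_eq_iff)
      then have "y v = x v" using D[OF x] D[OF y] e by metis
      then show "(E y, restrict y (insert v S)) = (E x, restrict x (insert v S))"
        using e r by (auto simp: restrict_eq_iff)
    qed (auto simp: restrict_eq_iff)
  qed
qed

lemma hS_V:
  assumes fin: "finite V"
  shows "hS V t E V = real (t * card V)"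
proof -
  have c: "cnt (msgs V t) (\<lambda>x. (E x, restrict x V)) x = 1" if "x \<in> msgs V t" for x
  proof -
    have "{w' \<in> msgs V t. (E w', restrict w' V) = (E x, restrict x V)} = {x}"
      using that by (auto simp: msgs_def PiE_def restrict_eq_iff extensional_def fun_eq_iff) (metis)
    then show ?thesis by (simp add: cnt_def)
  qed
  have "hS V t E V = (\<Sum>w\<in>msgs V t. log 2 (real (card (msgs V t)))) / real (card (msgs V t))"
    unfolding hS_def ent_def by (simp add: c cong: sum.cong)
  also have "\<dots> = log 2 (real (card (msgs V t)))"
    using msgs_ne[of V t] msgs_finite[OF fin, of t] by (simp add: card_gt_0_iff)
  also have "\<dots> = real (t * card V)" by (simp add: card_msgs[OF fin] log_nat_power)
  finally show ?thesis .
qed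

lemma hS_le:
  assumes fin: "finite V" and S: "S \<subseteq> V"
  shows "hS V t E S \<le> hS V t E {} + real (t * card S)"
proof -
  let ?\<Omega> = "msgs V t"
  have fO: "finite ?\<Omega>" by (rule msgs_finite[OF fin])
  have "ent ?\<Omega> (\<lambda>x. (E x, restrict x S, ())) + ent ?\<Omega> (\<lambda>x. ())
     \<le> ent ?\<Omega> (\<lambda>x. (E x, ())) + ent ?\<Omega> (\<lambda>x. (restrict x S, ()))"
    by (rule ent_submod[OF fO])
  moreover have "ent ?\<Omega> (\<lambda>x. (E x, restrict x S, ())) = hS V t E S"
    unfolding hS_def by (rule ent_cong) auto
  moreover have "ent ?\<Omega> (\<lambda>x. (E x, ())) = hS V t E {}"
    unfolding hS_def by (rule ent_cong) auto
  moreover have "ent ?\<Omega> (\<lambda>x. ()) = 0" by (rule ent_const[OF fO])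
  moreover have "ent ?\<Omega> (\<lambda>x. (restrict x S, ())) \<le> real (t * card S)"
  proof -
    have "ent ?\<Omega> (\<lambda>x. (restrict x S, ())) = ent ?\<Omega> (\<lambda>x. restrict x S)" by (rule ent_cong) auto
    also have "\<dots> \<le> log 2 (real (card ((\<lambda>x. restrict x S) ` ?\<Omega>)))"
      by (rule ent_le_card[OF fO msgs_ne])
    also have "\<dots> \<le> log 2 (real (card (PiE S (\<lambda>_. {..<(2::nat)^t}))))"
    proof -
      have sub: "(\<lambda>x. restrict x S) ` ?\<Omega> \<subseteq> PiE S (\<lambda>_. {..<(2::nat)^t})"
        using S by (auto simp: msgs_def PiE_def Pi_def)
      have fS: "finite S" using fin S finite_subset by blast
      have "card ((\<lambda>x. restrict x S) ` ?\<Omega>) \<le> card (PiE S (\<lambda>_. {..<(2::nat)^t}))"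
        by (rule card_mono[OF _ sub]) (simp add: finite_PiE fS)
      moreover have "card ((\<lambda>x. restrict x S) ` ?\<Omega>) > 0" using fO msgs_ne by (simp add: card_gt_0_iff)
      ultimately show ?thesis by simp
    qed
    also have "\<dots> = real (t * card S)"
    proof -
      have fS: "finite S" using fin S finite_subset by blast
      show ?thesis by (simp add: card_PiE fS power_mult[symmetric] log_nat_power mult.commute)
    qed
    finally show ?thesis .
  qed
  ultimately show ?thesis by linarith
qed

lemma hS_empty_le:
  assumes fin: "finite V" and sol: "ic_solution V N t P E" and fP: "finite P"
  shows "hS V t E {} \<le> log 2 (real (card P))"
proof -
  let ?\<Omega> = "msgs V t"
  have fO: "finite ?\<Omega>" by (rule msgs_finite[OF fin])
  have "hS V t E {} = ent ?\<Omega> E" unfolding hS_def by (rule ent_cong) auto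
  also have "\<dots> \<le> log 2 (real (card (E ` ?\<Omega>)))" by (rule ent_le_card[OF fO msgs_ne])
  also have "\<dots> \<le> log 2 (real (card P))"
  proof -
    have sub: "E ` ?\<Omega> \<subseteq> P" using sol by (auto simp: ic_solution_def)
    have "card (E ` ?\<Omega>) \<le> card P" by (rule card_mono[OF fP sub])
    moreover have "card (E ` ?\<Omega>) > 0" using fO msgs_ne by (simp add: card_gt_0_iff)
    ultimately show ?thesis by simp
  qed
  finally show ?thesis .
qed



definition Iv :: "nat \<Rightarrow> int \<Rightarrow> nat \<Rightarrow> nat set" where
  "Iv n a L = {j \<in> {0..<n}. (int j - a) mod int n < int L}"

lemma mod_sub_cases:
  fixes d c n :: int
  assumes "0 \<le> d" "d < n" "0 \<le> c" "c \<le> n"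
  shows "(d - c) mod n = (if c \<le> d then d - c else d - c + n)"
proof (cases "c \<le> d")
  case True then show ?thesis using assms by (simp add: mod_pos_pos_trivial)
next
  case False
  have "(d - c) mod n = (d - c + n) mod n" by (rule mod_add_self2[symmetric])
  also have "\<dots> = d - c + n" by (intro mod_pos_pos_trivial) (use assms False in auto)
  finally show ?thesis using False by simp
qed

lemma Iv_shift_mod: "(int j - (a + c)) mod int n = ((int j - a) mod int n - c) mod int n"
  by (simp add: mod_diff_left_eq algebra_simps)

lemma Iv_sub: "Iv n a L \<subseteq> {0..<n}" by (auto simp: Iv_def)

lemma Iv_0: "Iv n a 0 = {}"
proof -
  have "0 \<le> (int j - a) mod int n" if "j < n" for j using that by simp
  then show ?thesis unfolding Iv_def using not_less by fastforce
qed

lemma Iv_n: "Iv n a n = {0..<n}"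
  by (auto simp: Iv_def)

lemma Iv_per: "Iv n (a + int n) L = Iv n a L"
proof -
  have "(int j - (a + int n)) mod int n = (int j - a) mod int n" for j
    using mod_add_self2[of "int j - a - int n" "int n"] by (simp add: algebra_simps)
  then show ?thesis by (simp add: Iv_def)
qed

lemma Iv_un_int:
  assumes "L + 2 \<le> n"
  shows "Iv n a (L+1) \<union> Iv n (a+1) (L+1) = Iv n a (L+2)"
    and "Iv n a (L+1) \<inter> Iv n (a+1) (L+1) = Iv n (a+1) L"
proof -
  have n: "n > 0" using assms by simp
  have key: "j \<in> Iv n (a+1) M \<longleftrightarrow> j < n \<and> (if 1 \<le> (int j - a) mod int n then (int j - a) mod int n - 1 else (int j - a) mod int n - 1 + int n) < int M" for j M
  proof -
    have "(int j - (a + 1)) mod int n = ((int j - a) mod int n - 1) mod int n" by (rule Iv_shift_mod)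
    also have "\<dots> = (if 1 \<le> (int j - a) mod int n then (int j - a) mod int n - 1 else (int j - a) mod int n - 1 + int n)"
      by (rule mod_sub_cases) (use n in auto)
    finally show ?thesis by (auto simp: Iv_def)
  qed
  have key0: "j \<in> Iv n a M \<longleftrightarrow> j < n \<and> (int j - a) mod int n < int M" for j M by (auto simp: Iv_def)
  have b: "0 \<le> (int j - a) mod int n" "(int j - a) mod int n < int n" for j using n by auto
  have ai: "int L + 2 \<le> int n" using assms by simp
  have ar1: "\<And>d::int. 0 \<le> d \<Longrightarrow> d < int n \<Longrightarrow> (d < int (L+1) \<or> (if 1 \<le> d then d - 1 else d - 1 + int n) < int (L+1)) \<longleftrightarrow> d < int (L+2)"
    using ai by auto
  have ar2: "\<And>d::int. 0 \<le> d \<Longrightarrow> d < int n \<Longrightarrow> (d < int (L+1) \<and> (if 1 \<le> d then d - 1 else d - 1 + int n) < int (L+1)) \<longleftrightarrow> (if 1 \<le> d then d - 1 else d - 1 + int n) < int L"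
    using ai by auto
  show "Iv n a (L+1) \<union> Iv n (a+1) (L+1) = Iv n a (L+2)"
  proof (rule set_eqI)
    fix j show "j \<in> Iv n a (L+1) \<union> Iv n (a+1) (L+1) \<longleftrightarrow> j \<in> Iv n a (L+2)"
      unfolding Un_iff key key0 using ar1[OF b[of j]] by blast
  qed
  show "Iv n a (L+1) \<inter> Iv n (a+1) (L+1) = Iv n (a+1) L"
  proof (rule set_eqI)
    fix j show "j \<in> Iv n a (L+1) \<inter> Iv n (a+1) (L+1) \<longleftrightarrow> j \<in> Iv n (a+1) L"
      unfolding Int_iff key key0 using ar2[OF b[of j]] by blast
  qed
qed

lemma mod_eq_point:
  assumes "j < n"
  shows "(int j - a) mod int n = c mod int n \<longleftrightarrow> int j = (a + c) mod int n"
proof -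
  have jj: "int j = int j mod int n" using assms by simp
  have "(int j - a) mod int n = c mod int n \<longleftrightarrow> int j mod int n = (a + c) mod int n"
    by (simp add: mod_eq_dvd_iff algebra_simps)
  then show ?thesis using jj by simp
qed

lemma nbr_ne:
  assumes "k < n" "j \<in> circ_nbrs n k v"
  shows "j \<noteq> v"
proof
  assume jv: "j = v"
  from assms(2) obtain g where g: "g \<in> {1..k}" and c: "[int j - int v = int g] (mod int n) \<or> [int j - int v = - int g] (mod int n)"
    by (auto simp: circ_nbrs_def)
  then have "[int g = 0] (mod int n) \<or> [- int g = 0] (mod int n)" using jv by (auto simp: cong_sym_eq)
  then have "int n dvd int g" by (auto simp: cong_0_iff)
  then have "n dvd g" by simp
  then show False using g assms(1) by (auto dest: dvd_imp_le)
qed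

lemma nbr_offset:
  assumes kn: "2*k+2 \<le> n" and jN: "j \<in> circ_nbrs n k v" and v: "int v = (a + int k) mod int n"
  shows "\<exists>g\<in>{1..k}. (int j - a) mod int n = int g + int k \<or> (int j - a) mod int n = int k - int g"
proof -
  from jN obtain g where g: "g \<in> {1..k}" and c: "[int j - int v = int g] (mod int n) \<or> [int j - int v = - int g] (mod int n)"
    by (auto simp: circ_nbrs_def)
  have dv: "int n dvd int v - (a + int k)" using v mod_eq_dvd_iff[of "(a + int k) mod int n" "int n" "a + int k"] by simp
  show ?thesis
  proof (cases "[int j - int v = int g] (mod int n)")
    case True
    then have "int n dvd (int j - int v - int g)" by (simp add: cong_def mod_eq_dvd_iff)
    then have "int n dvd (int j - int v - int g) + (int v - (a + int k))" using dv by (rule dvd_add)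
    then have "(int j - a) mod int n = (int g + int k) mod int n" by (simp add: mod_eq_dvd_iff algebra_simps)
    also have "\<dots> = int g + int k" using g kn by (intro mod_pos_pos_trivial) auto
    finally show ?thesis using g by blast
  next
    case False
    then have "[int j - int v = - int g] (mod int n)" using c by blast
    then have "int n dvd (int j - int v + int g)" by (simp add: cong_def mod_eq_dvd_iff)
    then have "int n dvd (int j - int v + int g) + (int v - (a + int k))" using dv by (rule dvd_add)
    then have "(int j - a) mod int n = (int k - int g) mod int n" by (simp add: mod_eq_dvd_iff algebra_simps)
    also have "\<dots> = int k - int g" using g kn by (intro mod_pos_pos_trivial) auto
    finally show ?thesis using g by blast
  qed
qed

lemma Iv_hole:
  fixes a :: int
  assumes kn: "2*k+2 \<le> n"
  defines "v \<equiv> nat ((a + int k) mod int n)"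
  shows "v < n" "Iv n a (2*k+1) = insert v (Iv n a k \<union> Iv n (a + int k + 1) k)"
    "v \<notin> Iv n a k \<union> Iv n (a + int k + 1) k" "Iv n a k \<inter> Iv n (a + int k + 1) k = {}"
    "circ_nbrs n k v \<subseteq> Iv n a k \<union> Iv n (a + int k + 1) k"
proof -
  have n: "n > 0" using kn by simp
  have iv: "int v = (a + int k) mod int n" using n by (simp add: v_def)
  show "v < n" using n iv by (metis of_nat_less_iff pos_mod_bound of_nat_0_less_iff)
  have kmod: "int k mod int n = int k" using kn by (intro mod_pos_pos_trivial) auto
  have eqv: "j = v \<longleftrightarrow> (int j - a) mod int n = int k" if "j < n" for j
    using mod_eq_point[OF that, of a "int k"] kmod iv by auto
  have b: "0 \<le> (int j - a) mod int n" "(int j - a) mod int n < int n" for j using n by auto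
  have k2: "j \<in> Iv n (a + int k + 1) M \<longleftrightarrow> j < n \<and> (if int k + 1 \<le> (int j - a) mod int n then (int j - a) mod int n - (int k + 1) else (int j - a) mod int n - (int k + 1) + int n) < int M" for j M
  proof -
    have "(int j - (a + (int k + 1))) mod int n = ((int j - a) mod int n - (int k + 1)) mod int n" by (rule Iv_shift_mod)
    also have "\<dots> = (if int k + 1 \<le> (int j - a) mod int n then (int j - a) mod int n - (int k + 1) else (int j - a) mod int n - (int k + 1) + int n)"
      by (rule mod_sub_cases) (use n kn in auto)
    finally show ?thesis by (auto simp: Iv_def add.assoc)
  qed
  have k0: "j \<in> Iv n a M \<longleftrightarrow> j < n \<and> (int j - a) mod int n < int M" for j M by (auto simp: Iv_def)
  have kk: "int k + 2 + int k \<le> int n" using kn by simp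
  have ar: "\<And>d::int. 0 \<le> d \<Longrightarrow> d < int n \<Longrightarrow> (d < int (2*k+1)) \<longleftrightarrow> (d = int k \<or> d < int k \<or> (if int k + 1 \<le> d then d - (int k + 1) else d - (int k + 1) + int n) < int k)"
    using kk by auto
  show "Iv n a (2*k+1) = insert v (Iv n a k \<union> Iv n (a + int k + 1) k)"
  proof (rule set_eqI)
    fix j
    show "j \<in> Iv n a (2*k+1) \<longleftrightarrow> j \<in> insert v (Iv n a k \<union> Iv n (a + int k + 1) k)"
    proof (cases "j < n")
      case True
      show ?thesis unfolding insert_iff Un_iff k0 k2 eqv[OF True] using True ar[OF b[of j]] by blast
    next
      case False
      then show ?thesis using \<open>v < n\<close> by (auto simp: Iv_def)
    qed
  qed
  have ar2: "\<And>d::int. d = int k \<Longrightarrow> \<not> (d < int k \<or> (if int k + 1 \<le> d then d - (int k + 1) else d - (int k + 1) + int n) < int k)"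
    using kk by auto
  show "v \<notin> Iv n a k \<union> Iv n (a + int k + 1) k"
    unfolding Un_iff k0 k2 using ar2[OF eqv[OF \<open>v < n\<close>, THEN iffD1, OF refl]] by blast
  have ar3: "\<And>d::int. 0 \<le> d \<Longrightarrow> d < int n \<Longrightarrow> \<not> (d < int k \<and> (if int k + 1 \<le> d then d - (int k + 1) else d - (int k + 1) + int n) < int k)"
    using kk by auto
  show "Iv n a k \<inter> Iv n (a + int k + 1) k = {}"
  proof (rule equals0I)
    fix j assume "j \<in> Iv n a k \<inter> Iv n (a + int k + 1) k"
    then show False unfolding Int_iff k0 k2 using ar3[OF b[of j]] by blast
  qed
  show "circ_nbrs n k v \<subseteq> Iv n a k \<union> Iv n (a + int k + 1) k"
  proof
    fix j assume jN: "j \<in> circ_nbrs n k v"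
    have jn: "j < n" using jN by (auto simp: circ_nbrs_def)
    obtain g where g: "g \<in> {1..k}" and off: "(int j - a) mod int n = int g + int k \<or> (int j - a) mod int n = int k - int g"
      using nbr_offset[OF kn jN iv] by blast
    have ar4: "\<And>d::int. d = int g + int k \<or> d = int k - int g \<Longrightarrow> (d < int k \<or> (if int k + 1 \<le> d then d - (int k + 1) else d - (int k + 1) + int n) < int k)"
      using g kk by auto
    show "j \<in> Iv n a k \<union> Iv n (a + int k + 1) k"
      unfolding Un_iff k0 k2 using jn ar4[OF off] by blast
  qed
qed

lemma Iv_last:
  fixes a :: int
  assumes n: "2 \<le> n"
  defines "v \<equiv> nat ((a - 1) mod int n)"
  shows "v < n" "Iv n a (n - 1) = {0..<n} - {v}"
proof -
  have iv: "int v = (a - 1) mod int n" using n by (simp add: v_def)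
  show "v < n" using n iv by (metis of_nat_less_iff pos_mod_bound of_nat_0_less_iff less_le_trans zero_less_numeral)
  have m1: "(-1) mod int n = int n - 1" using n by (simp add: zmod_zminus1_eq_if)
  have eqv: "j = v \<longleftrightarrow> (int j - a) mod int n = int n - 1" if "j < n" for j
    using mod_eq_point[OF that, of a "-1"] m1 iv by auto
  have b: "(int j - a) mod int n < int n" for j using n by auto
  show "Iv n a (n - 1) = {0..<n} - {v}"
  proof (rule set_eqI)
    fix j show "j \<in> Iv n a (n - 1) \<longleftrightarrow> j \<in> {0..<n} - {v}"
    proof (cases "j < n")
      case True
      have ar: "\<And>d::int. d < int n \<Longrightarrow> (d < int (n - 1)) \<longleftrightarrow> d \<noteq> int n - 1" using n by auto
      have "(int j - a) mod int n < int (n - 1) \<longleftrightarrow> (int j - a) mod int n \<noteq> int n - 1"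
        by (rule ar[OF b[of j]])
      then show ?thesis using True eqv[OF True] by (auto simp: Iv_def)
    next
      case False then show ?thesis by (auto simp: Iv_def)
    qed
  qed
qed



lemma sum_shift1:
  fixes g :: "int \<Rightarrow> real"
  assumes per: "\<And>x. g (x + int n) = g x"
  shows "(\<Sum>a<n. g (int a + 1)) = (\<Sum>a<n. g (int a))"
proof -
  have "(\<Sum>a<Suc n. g (int a)) = g 0 + (\<Sum>a<n. g (int (Suc a)))" by (subst sum.lessThan_Suc_shift) simp
  moreover have "(\<Sum>a<Suc n. g (int a)) = (\<Sum>a<n. g (int a)) + g (int n)" by simp
  moreover have "g (int n) = g 0" using per[of 0] by simp
  ultimately show ?thesis by (simp add: add.commute)
qed

lemma sum_shift:
  fixes g :: "int \<Rightarrow> real"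
  assumes per: "\<And>x. g (x + int n) = g x"
  shows "(\<Sum>a<n. g (int a + int c)) = (\<Sum>a<n. g (int a))"
proof (induction c)
  case 0 then show ?case by simp
next
  case (Suc c)
  have "(\<Sum>a<n. g (int a + int (Suc c))) = (\<Sum>a<n. (\<lambda>x. g (x + int c)) (int a + 1))"
    by (simp add: algebra_simps)
  also have "\<dots> = (\<Sum>a<n. (\<lambda>x. g (x + int c)) (int a))"
  proof (rule sum_shift1)
    fix x show "g (x + int n + int c) = g (x + int c)" using per[of "x + int c"] by (simp add: algebra_simps)
  qed
  finally show ?case using Suc by simp
qed

lemma circ_lower:
  fixes f :: "nat set \<Rightarrow> real" and t :: real
  assumes kn: "2*k+2 \<le> n"
  and F1: "\<And>A B. A \<subseteq> {0..<n} \<Longrightarrow> B \<subseteq> {0..<n} \<Longrightarrow> f (A \<union> B) + f (A \<inter> B) \<le> f A + f B"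
  and F2: "\<And>v S. v < n \<Longrightarrow> circ_nbrs n k v \<subseteq> S \<Longrightarrow> S \<subseteq> {0..<n} \<Longrightarrow> v \<notin> S \<Longrightarrow> f (insert v S) = f S - t"
  and F3: "f {0..<n} = 0"
  and F4: "\<And>S. S \<subseteq> {0..<n} \<Longrightarrow> f S \<le> f {}"
  shows "real n * t / (real k + 1) \<le> f {}"
proof -
  define S where "S L = (\<Sum>a<n. f (Iv n (int a) L))" for L
  have per: "\<And>x. f (Iv n (x + int n) L) = f (Iv n x L)" for L by (simp add: Iv_per)
  have shift: "(\<Sum>a<n. f (Iv n (int a + int c) L)) = S L" for c L
    unfolding S_def using sum_shift[of "\<lambda>x. f (Iv n x L)" n c] per by simp
  have n: "n > 0" using kn by simp
  have shift1: "(\<Sum>a<n. f (Iv n (int a + 1) L)) = S L" for L using shift[of 1 L] by simp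
  have shiftk: "(\<Sum>a<n. f (Iv n (int a + int k + 1) L)) = S L" for L 
  proof -
    have "int a + int k + 1 = int a + int (k+1)" for a by simp
    then show ?thesis using shift[of "k+1" L] by presburger
  qed
  have conc: "S (L+2) + S L \<le> 2 * S (L+1)" if L: "L + 2 \<le> n" for L
  proof -
    have "(\<Sum>a<n. f (Iv n (int a) (L+2)) + f (Iv n (int a + int 1) L))
        \<le> (\<Sum>a<n. f (Iv n (int a) (L+1)) + f (Iv n (int a + int 1) (L+1)))"
    proof (rule sum_mono)
      fix a
      show "f (Iv n (int a) (L+2)) + f (Iv n (int a + int 1) L) \<le> f (Iv n (int a) (L+1)) + f (Iv n (int a + int 1) (L+1))"
        using F1[of "Iv n (int a) (L+1)" "Iv n (int a + 1) (L+1)", OF Iv_sub Iv_sub] Iv_un_int[OF L, of "int a"] by simp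
    qed
    then show ?thesis by (simp add: sum.distrib shift1 S_def[symmetric])
  qed
  have hole: "S (2*k+1) + S 0 + real n * t \<le> 2 * S k"
  proof -
    have "(\<Sum>a<n. f (Iv n (int a) (2*k+1)) + f {} + t) \<le> (\<Sum>a<n. f (Iv n (int a) k) + f (Iv n (int a + int k + 1) k))"
    proof (rule sum_mono)
      fix a
      let ?a = "int a"
      let ?v = "nat ((?a + int k) mod int n)"
      let ?U = "Iv n ?a k \<union> Iv n (?a + int k + 1) k"
      note H = Iv_hole[OF kn, of ?a]
      have U: "?U \<subseteq> {0..<n}" using Iv_sub by blast
      have "f (Iv n ?a (2*k+1)) = f ?U - t"
        using H(2) F2[OF H(1) H(5) U H(3)] by simp
      moreover have "f ?U + f {} \<le> f (Iv n ?a k) + f (Iv n (?a + int k + 1) k)"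
        using F1[of "Iv n ?a k" "Iv n (?a + int k + 1) k", OF Iv_sub Iv_sub] H(4) by simp
      ultimately show "f (Iv n ?a (2*k+1)) + f {} + t \<le> f (Iv n ?a k) + f (Iv n (?a + int k + 1) k)"
        by simp
    qed
    moreover have "S 0 = real n * f {}" by (simp add: S_def Iv_0)
    ultimately show ?thesis by (simp add: sum.distrib shiftk S_def[symmetric])
  qed
  have last: "S (n - 1) = real n * t"
  proof -
    have "f (Iv n (int a) (n - 1)) = t" for a
    proof -
      let ?v = "nat ((int a - 1) mod int n)"
      have n2: "2 \<le> n" using kn by simp
      note L = Iv_last[OF n2, of "int a"]
      have vn: "?v < n" by (rule L(1))
      have nb: "circ_nbrs n k ?v \<subseteq> {0..<n} - {?v}"
        using nbr_ne[of k n _ ?v] kn by (auto simp: circ_nbrs_def)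
      have "f (insert ?v ({0..<n} - {?v})) = f ({0..<n} - {?v}) - t"
        by (rule F2[OF vn nb]) auto
      moreover have "insert ?v ({0..<n} - {?v}) = {0..<n}" using vn by auto
      ultimately show ?thesis using F3 L(2) by simp
    qed
    then show ?thesis by (simp add: S_def)
  qed
  have Sn: "S n = 0" by (simp add: S_def Iv_n F3)
  have Sk: "S k \<le> S 0" unfolding S_def Iv_0
    by (rule sum_mono) (rule F4[OF Iv_sub])
  have S0: "S 0 = real n * f {}" by (simp add: S_def Iv_0)
  define \<delta> where "\<delta> j = S j - S (Suc j)" for j
  have dstep: "\<delta> j \<le> \<delta> (Suc j)" if "j + 2 \<le> n" for j
    using conc[OF that] by (simp add: \<delta>_def)
  have dmono: "\<delta> i \<le> \<delta> j" if "i \<le> j" "j \<le> n - 1" for i j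
    using that(1,2)
  proof (induction j rule: dec_induct)
    case base then show ?case by simp
  next
    case (step m)
    then have "m + 2 \<le> n" by arith
    then show ?case using dstep[of m] step by simp
  qed
  have tele: "S a - S b = (\<Sum>j = a..<b. \<delta> j)" if "a \<le> b" for a b
    using sum_Suc_diff'[OF that, of "\<lambda>j. - S j"] by (simp add: \<delta>_def)
  have w1: "S k - S (2*k+1) \<le> real (k+1) * \<delta> (2*k)"
  proof -
    have "S k - S (2*k+1) = (\<Sum>j = k..<2*k+1. \<delta> j)" by (rule tele) simp
    also have "\<dots> \<le> (\<Sum>j = k..<2*k+1. \<delta> (2*k))"
      by (rule sum_mono, rule dmono) (use kn in auto)
    also have "\<dots> = real (k+1) * \<delta> (2*k)" by simp
    finally show ?thesis .
  qed
  have w2: "real (n - 2*k - 2) * \<delta> (2*k) \<le> S (2*k+1) - S (n - 1)"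
  proof -
    have "real (n - 2*k - 2) * \<delta> (2*k) = (\<Sum>j = 2*k+1..<n-1. \<delta> (2*k))" by simp
    also have "\<dots> \<le> (\<Sum>j = 2*k+1..<n-1. \<delta> j)"
      by (rule sum_mono, rule dmono) (use kn in auto)
    also have "\<dots> = S (2*k+1) - S (n - 1)" by (rule tele[symmetric]) (use kn in simp)
    finally show ?thesis .
  qed
  have A: "real n * t \<le> S k - S (2*k+1)" using hole Sk by linarith
  have dk: "real n * t / (real k + 1) \<le> \<delta> (2*k)" using A w1 by (simp add: divide_le_eq algebra_simps)
  have nk: "real (n - 2*k - 2) = real n - 2 * real k - 2" using kn by (simp add: of_nat_diff)
  have "S 0 \<ge> real n * t + real (n - 2*k - 2) * (real n * t / (real k + 1)) + real n * t"
  proof -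
    have "real (n - 2*k - 2) * (real n * t / (real k + 1)) \<le> real (n - 2*k - 2) * \<delta> (2*k)"
      by (rule mult_left_mono[OF dk]) simp
    then show ?thesis using w2 A Sk last by linarith
  qed
  also have "real n * t + real (n - 2*k - 2) * (real n * t / (real k + 1)) + real n * t
      = real n * (real n * t / (real k + 1))"
    unfolding nk by (simp add: field_simps)
  finally have "real n * (real n * t / (real k + 1)) \<le> real n * f {}" using S0 by simp
  then have "real n * (real n * t / (real k + 1)) \<le> real n * f {}" by simp
  moreover have "real n > 0" using n by simp
  ultimately show ?thesis by (meson mult_le_cancel_left_pos)
qed



lemma nbr_pos:
  assumes kn: "2*k+2 \<le> n" and v: "v < n" and i: "i < k+1" and i': "i' < k+1" and ne: "i \<noteq> i'"
  shows "((v + n - i) mod n + i') mod n \<in> circ_nbrs n k v"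
proof -
  define u where "u = ((v + n - i) mod n + i') mod n"
  have u: "u = (v + n - i + i') mod n" unfolding u_def by (simp add: mod_add_left_eq)
  have n: "n > 0" using kn by simp
  have un: "u < n" using n u by simp
  have "int u = int (v + n - i + i') mod int n" using u by (simp add: of_nat_mod)
  also have "int (v + n - i + i') = int v + int n - int i + int i'" using i kn by (simp add: of_nat_diff)
  finally have iu: "int u = (int v + int n - int i + int i') mod int n" .
  have du: "int n dvd int u - (int v + int n - int i + int i')"
    unfolding iu using mod_eq_dvd_iff[of "(int v + int n - int i + int i') mod int n" "int n" "int v + int n - int i + int i'"]
    by simp
  show ?thesis
  proof (cases "i < i'")
    case True
    define g where "g = i' - i"
    have g: "g \<in> {1..k}" using True i' by (auto simp: g_def)
    have "int n dvd (int u - (int v + int n - int i + int i')) + int n" by (rule dvd_add[OF du dvd_refl])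
    moreover have "(int u - (int v + int n - int i + int i')) + int n = int u - int v - int g"
      using True by (simp add: g_def of_nat_diff)
    ultimately have "int n dvd int u - int v - int g" by metis
    then have "[int u - int v = int g] (mod int n)" by (simp add: cong_def mod_eq_dvd_iff)
    then show ?thesis using g un unfolding u_def[symmetric] circ_nbrs_def by auto
  next
    case False
    then have lt: "i' < i" using ne by simp
    define g where "g = i - i'"
    have g: "g \<in> {1..k}" using lt i by (auto simp: g_def)
    have "int n dvd (int u - (int v + int n - int i + int i')) + int n" by (rule dvd_add[OF du dvd_refl])
    moreover have "(int u - (int v + int n - int i + int i')) + int n = int u - int v - (- int g)"
      using lt by (simp add: g_def of_nat_diff)
    ultimately have "int n dvd int u - int v - (- int g)" by metis
    then have "[int u - int v = - int g] (mod int n)" by (simp add: cong_def mod_eq_dvd_iff)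
    then show ?thesis using g un unfolding u_def[symmetric] circ_nbrs_def by auto
  qed
qed

lemma mod2_cancel: "(((b::nat) + R) mod 2 + R) mod 2 = b mod 2"
proof -
  have "((b + R) mod 2 + R) mod 2 = (b + R + R) mod 2" by (simp add: mod_add_left_eq)
  also have "b + R + R = b + R * 2" by simp
  also have "(b + R * 2) mod 2 = b mod 2" by (rule mod_mult_self1)
  finally show ?thesis .
qed

lemma upper_code:
  assumes kn: "2*k+2 \<le> n"
  shows "\<exists>E. ic_solution {0..<n} (circ_nbrs n k) (k+1) {..<2^n} E"
proof -
  define m where "m = k + 1"
  define B2 where "B2 = PiE {..<m} (\<lambda>_. {0,1::nat})"
  define PV where "PV = PiE {0..<n} (\<lambda>_. {0,1::nat})"
  have cB2: "card B2 = card {..<(2::nat)^m}" by (simp add: B2_def card_PiE numeral_2_eq_2)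
  have cPV: "card PV = card {..<(2::nat)^n}" by (simp add: PV_def card_PiE numeral_2_eq_2)
  obtain bits where bits: "bij_betw bits {..<(2::nat)^m} B2"
    using finite_same_card_bij[of "{..<(2::nat)^m}" B2] cB2 by (auto simp: B2_def finite_PiE)
  obtain enc where enc: "bij_betw enc PV {..<(2::nat)^n}"
    using finite_same_card_bij[of PV "{..<(2::nat)^n}"] cPV by (auto simp: PV_def finite_PiE)
  define par where "par x j = (\<Sum>i<m. bits (x ((j+i) mod n)) i) mod 2" for x :: "nat \<Rightarrow> nat" and j
  define E where "E x = enc (\<lambda>j\<in>{0..<n}. par x j)" for x
  have parPV: "(\<lambda>j\<in>{0..<n}. par x j) \<in> PV" for x by (auto simp: PV_def par_def)
  have Ein: "E x \<in> {..<2^n}" for x using bij_betw_apply[OF enc parPV] by (simp add: E_def)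
  have dec_enc: "inv_into PV enc (E x) = (\<lambda>j\<in>{0..<n}. par x j)" for x
    unfolding E_def by (rule inv_into_f_f[OF bij_betw_imp_inj_on[OF enc] parPV])
  show ?thesis
  proof (intro exI conjI)
    show "ic_solution {0..<n} (circ_nbrs n k) (k+1) {..<2^n} E"
      unfolding ic_solution_def
    proof (intro conjI ballI)
      fix x show "E x \<in> {..<2^n}" by (rule Ein)
    next
      fix v assume v: "v \<in> {0..<n}"
      define jj where "jj i = (v + n - i) mod n" for i
      define D where "D q y = inv_into {..<(2::nat)^m} bits (\<lambda>i\<in>{..<m}.
          (inv_into PV enc q (jj i) + (\<Sum>i'\<in>{..<m}-{i}. bits (y ((jj i + i') mod n)) i')) mod 2)"
        for q and y :: "nat \<Rightarrow> nat"
      show "\<exists>D. \<forall>x\<in>msgs {0..<n} (k + 1). D (E x) (restrict x (circ_nbrs n k v)) = x v"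
      proof (intro exI ballI)
        fix x assume x: "x \<in> msgs {0..<n} (k+1)"
        have xv: "x v \<in> {..<(2::nat)^m}" using x v by (auto simp: msgs_def m_def)
        have bxv: "bits (x v) \<in> B2" using bij_betw_apply[OF bits xv] .
        have n: "n > 0" using kn by simp
        have main: "(inv_into PV enc (E x) (jj i) + (\<Sum>i'\<in>{..<m}-{i}. bits (restrict x (circ_nbrs n k v) ((jj i + i') mod n)) i')) mod 2
             = bits (x v) i" if i: "i < m" for i
        proof -
          have jjn: "jj i < n" using n by (simp add: jj_def)
          have jjv: "(jj i + i) mod n = v"
          proof -
            have "(jj i + i) mod n = (v + n - i + i) mod n" by (simp add: jj_def mod_add_left_eq)
            also have "v + n - i + i = v + n" using i kn by (simp add: m_def)
            finally show ?thesis using v by simp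
          qed
          have R: "(\<Sum>i'\<in>{..<m}-{i}. bits (restrict x (circ_nbrs n k v) ((jj i + i') mod n)) i')
              = (\<Sum>i'\<in>{..<m}-{i}. bits (x ((jj i + i') mod n)) i')"
          proof (rule sum.cong[OF refl])
            fix i' assume i': "i' \<in> {..<m}-{i}"
            have "(jj i + i') mod n \<in> circ_nbrs n k v"
              unfolding jj_def by (rule nbr_pos[OF kn]) (use v i i' in \<open>auto simp: m_def\<close>)
            then show "bits (restrict x (circ_nbrs n k v) ((jj i + i') mod n)) i' = bits (x ((jj i + i') mod n)) i'"
              by simp
          qed
          have p: "par x (jj i) = (bits (x v) i + (\<Sum>i'\<in>{..<m}-{i}. bits (x ((jj i + i') mod n)) i')) mod 2"
            unfolding par_def using i by (simp add: sum.remove[of "{..<m}" i] jjv)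
          have b01: "bits (x v) i \<in> {0,1}" using bxv i by (auto simp: B2_def)
          show ?thesis unfolding dec_enc R using jjn p mod2_cancel b01 by auto
        qed
        have "(\<lambda>i\<in>{..<m}. (inv_into PV enc (E x) (jj i) + (\<Sum>i'\<in>{..<m}-{i}. bits (restrict x (circ_nbrs n k v) ((jj i + i') mod n)) i')) mod 2)
            = bits (x v)"
        proof
          fix i show "(\<lambda>i\<in>{..<m}. (inv_into PV enc (E x) (jj i) + (\<Sum>i'\<in>{..<m}-{i}. bits (restrict x (circ_nbrs n k v) ((jj i + i') mod n)) i')) mod 2) i = bits (x v) i"
            using main bxv by (cases "i < m") (auto simp: B2_def PiE_def extensional_def)
        qed
        then show "D (E x) (restrict x (circ_nbrs n k v)) = x v"
          unfolding D_def using inv_into_f_f[OF bij_betw_imp_inj_on[OF bits] xv] by simp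
      qed
    qed
  qed
qed



lemma trivial_code:
  assumes fin: "finite V"
  shows "\<exists>P E. finite P \<and> ic_solution V N t P E"
proof -
  obtain h where h: "bij_betw h (msgs V t) {0..<card (msgs V t)}"
    using ex_bij_betw_finite_nat[OF msgs_finite[OF fin]] by blast
  have "ic_solution V N t {0..<card (msgs V t)} h"
    unfolding ic_solution_def
  proof (intro conjI ballI)
    fix x assume "x \<in> msgs V t" then show "h x \<in> {0..<card (msgs V t)}" using bij_betw_apply[OF h] by blast
  next
    fix v assume v: "v \<in> V"
    show "\<exists>D. \<forall>x\<in>msgs V t. D (h x) (restrict x (N v)) = x v"
      by (rule exI[of _ "\<lambda>p y. inv_into (msgs V t) h p v"])
         (simp add: inv_into_f_f[OF bij_betw_imp_inj_on[OF h]])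
  qed
  then show ?thesis by blast
qed

lemma lower_sol:
  assumes kn: "2*k+2 \<le> n" and fP: "finite P"
    and sol: "ic_solution {0..<n} (circ_nbrs n k) t P E"
  shows "real t * real n / (real k + 1) \<le> log 2 (real (card P))"
proof -
  let ?V = "{0..<n}"
  define f where "f S = hS ?V t E S - real t * real (card S)" for S
  have fin: "finite ?V" by simp
  have "real n * real t / (real k + 1) \<le> f {}"
  proof (rule circ_lower[OF kn])
    fix A B assume A: "A \<subseteq> ?V" and B: "B \<subseteq> ?V"
    have fA: "finite A" "finite B" using A B finite_subset by auto
    have c: "card (A \<union> B) + card (A \<inter> B) = card A + card B" by (rule card_Un_Int[OF fA, symmetric])
    have "real (card (A \<union> B)) + real (card (A \<inter> B)) = real (card A) + real (card B)"
      using c by (metis of_nat_add)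
    then have ct: "real t * real (card (A \<union> B)) + real t * real (card (A \<inter> B)) = real t * real (card A) + real t * real (card B)"
      by (metis distrib_left)
    show "f (A \<union> B) + f (A \<inter> B) \<le> f A + f B"
      using hS_submod[OF fin, of t E A B] ct unfolding f_def by linarith
  next
    fix v S assume v: "v < n" and NS: "circ_nbrs n k v \<subseteq> S" and S: "S \<subseteq> ?V" and vS: "v \<notin> S"
    have fS: "finite S" using S finite_subset by auto
    show "f (insert v S) = f S - real t"
      using hS_decode[OF sol _ NS] v vS fS unfolding f_def by (simp add: algebra_simps)
  next
    show "f ?V = 0" using hS_V[OF fin, of t E] unfolding f_def by simp
  next
    fix S assume S: "S \<subseteq> ?V"
    show "f S \<le> f {}" using hS_le[OF fin S, of t E] unfolding f_def by simp
  qed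
  also have "f {} \<le> log 2 (real (card P))"
    using hS_empty_le[OF fin sol fP] unfolding f_def by simp
  finally show ?thesis by (simp add: mult.commute)
qed

lemma beta_lower:
  assumes kn: "2*k+2 \<le> n"
  shows "real t * real n / (real k + 1) \<le> real (beta_t {0..<n} (circ_nbrs n k) t)"
proof -
  let ?Q = "\<lambda>m. \<exists>P E. finite P \<and> ic_solution {0..<n} (circ_nbrs n k) t P E \<and> m = nat \<lceil>log 2 (real (card P))\<rceil>"
  obtain P E where "finite P" "ic_solution {0..<n} (circ_nbrs n k) t P E"
    using trivial_code[of "{0..<n}"] by blast
  then have ex: "\<exists>m. ?Q m" by blast
  have "?Q (beta_t {0..<n} (circ_nbrs n k) t)" unfolding beta_t_def by (rule LeastI_ex[OF ex])
  then obtain P E where fP: "finite P" and sol: "ic_solution {0..<n} (circ_nbrs n k) t P E"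
    and eq: "beta_t {0..<n} (circ_nbrs n k) t = nat \<lceil>log 2 (real (card P))\<rceil>" by blast
  have "real t * real n / (real k + 1) \<le> log 2 (real (card P))" by (rule lower_sol[OF kn fP sol])
  also have "\<dots> \<le> real (nat \<lceil>log 2 (real (card P))\<rceil>)" by (rule real_nat_ceiling_ge)
  finally show ?thesis using eq by simp
qed

lemma beta_upper:
  assumes kn: "2*k+2 \<le> n"
  shows "beta_t {0..<n} (circ_nbrs n k) (k+1) \<le> n"
proof -
  obtain E where sol: "ic_solution {0..<n} (circ_nbrs n k) (k+1) {..<2^n} E" using upper_code[OF kn] by blast
  have l: "nat \<lceil>log 2 (real (card {..<(2::nat)^n}))\<rceil> = n" by (simp add: log_nat_power)
  show ?thesis unfolding beta_t_def
    by (rule Least_le) (use sol l in \<open>auto intro!: exI[of _ "{..<(2::nat)^n}"]\<close>)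
qed

theorem theorem5p3:
  fixes n k :: nat
  assumes "n \<ge> 4" and "real k < (real n - 1) / 2"
  shows "broadcast_rate {0..<n} (circ_nbrs n k) = real n / (real k + 1)"
proof -
  have "real (2*k+1) < real n" using assms(2) by simp
  then have "2*k+1 < n" by (simp only: of_nat_less_iff)
  then have kn: "2*k+2 \<le> n" by simp
  let ?g = "\<lambda>t. real (beta_t {0..<n} (circ_nbrs n k) t) / real t"
  have lb: "real n / (real k + 1) \<le> ?g t" if t: "t \<in> {1..}" for t
  proof -
    have tp: "real t > 0" using t by simp
    have "real t * (real n / (real k + 1)) \<le> real (beta_t {0..<n} (circ_nbrs n k) t)"
      using beta_lower[OF kn, of t] by simp
    then show ?thesis using tp by (simp add: le_divide_eq mult.commute)
  qed
  have ub: "?g (k+1) \<le> real n / (real k + 1)"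
  proof -
    have "real (beta_t {0..<n} (circ_nbrs n k) (k+1)) \<le> real n" using beta_upper[OF kn] by simp
    then have "real (beta_t {0..<n} (circ_nbrs n k) (k+1)) / (real k + 1) \<le> real n / (real k + 1)"
      by (rule divide_right_mono) simp
    then show ?thesis by (simp add: add.commute)
  qed
  have "broadcast_rate {0..<n} (circ_nbrs n k) = (INF t\<in>{1..}. ?g t)" by (simp add: broadcast_rate_def)
  also have "\<dots> = real n / (real k + 1)"
  proof (rule antisym)
    have "(INF t\<in>{1..}. ?g t) \<le> ?g (k+1)"
      by (rule cINF_lower) (use lb in \<open>auto intro!: bdd_belowI2\<close>)
    then show "(INF t\<in>{1..}. ?g t) \<le> real n / (real k + 1)" using ub by linarith
  next
    show "real n / (real k + 1) \<le> (INF t\<in>{1..}. ?g t)"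
      by (rule cINF_greatest) (use lb in auto)
  qed
  finally show ?thesis .
qed


end
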